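(* Let $\Theta\subset\mathbb{R}$ be a finite set of states, $\pi$ a probability distribution on $\Theta$ (Alice's prior) and $\widetilde\pi$ a probability distribution on $\Theta$ (Carroll's prior). Then Carroll is monotonic-optimistic if and only if $\widetilde\pi$ is a monotonic strengthening of $\pi$. Moreover, these are also equivalent to each of the following statements: (i) $\widetilde\pi\ge_{\mathrm{lr}}\pi$ on $\Theta$; (ii) $\widetilde{\mathbb{P}}\ge_{\mathrm{lr}}\mathbb{P}$ on $S$ for every MLRP signaling structure $(S,\sigma)$; (iii) $(R,\widetilde{\mathbb{P}})\ge_{\mathrm{lr}}(R,\mathbb{P})$ for every MLRP signaling structure $(S,\sigma)$ and every increasing function $R:S\to\mathbb{R}$.
   Context: A signaling structure on $\Theta$ is a finite set $S\subset\mathbb{R}$ of signals with probabilities $\sigma(s\mid\theta)\ge0$, $\sum_{s\in S}\sigma(s\mid\theta)=1$ for each $\theta$. It has the monotone likelihood ratio property (MLRP) if $\sigma(s'\mid\theta)/\sigma(s\mid\theta)$ is (weakly) increasing in $\theta$ whenever $s'>s$. For a prior $\rho$, $\mathbb{P}_{\rho,\sigma}(\theta,s)=\rho(\theta)\sigma(s\mid\theta)$; write $\mathbb{P}=\mathbb{P}_{\pi,\sigma}$, $\widetilde{\mathbb{P}}=\mathbb{P}_{\widetilde\pi,\sigma}$ (and their marginals on $S$). For $\Gamma\subseteq\Theta$, Alice's posterior is $Q_\Gamma(s)=\mathbb{P}(\Gamma\mid s)$ (for $\mathbb{P}(s)>0$). For a function $R$ on $S$ and a probability $\mathbb{Q}$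 on $S$, $(R,\mathbb{Q})$ denotes the random variable taking value $R(s)$ with probability $\mathbb{Q}(s)$. $X\ge_{\mathrm{lr}}Y$ (likelihood ratio order) means $\mathbb{P}(X=v)/\mathbb{P}(Y=v)$ is weakly increasing in $v$ (equivalently $\mathbb{P}(X=u)\mathbb{P}(Y=v)\le\mathbb{P}(X=v)\mathbb{P}(Y=u)$ for $u<v$); for distributions on $\Theta$ or $S$ it is applied to the identity random variable. A set $\Gamma\subseteq\Theta$ is an upper set if $\theta\in\Gamma$, $\theta'\in\Theta$, $\theta'>\theta$ imply $\theta'\in\Gamma$. Carroll is monotonic-optimistic if $(Q_\Gamma,\widetilde{\mathbb{P}})\ge_{\mathrm{lr}}(Q_\Gamma,\mathbb{P})$ for every upper set $\Gamma\subseteq\Theta$ and every MLRP signaling structure $(S,\sigma)$. For a prior $\rho$ and $\Gamma$ with $\rho(\Gamma)>0$, a $\Gamma$-strengthening of $\rho$ is any $a\rho^\Gamma+(1-a)\rho$ with $a\in[0,1]$, where $\rho^\Gamma(\theta)=\rho(\theta\mid\Gamma)$. $\widetilde\pi$ is a monotonic strengthening of $\pi$ if it is obtained by a finite sequence of $\Gamma_i$-strengthenings starting from $\pi$ (each applied to the distribution obtained at the previous step), where all $\Gamma_i\subset\Theta$ are upper sets. Increasing means weakly increasing. *)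

theory Defs
  imports Main "HOL.Real"
begin

text \<open>States are reals in a finite set Th; distributions are functions real => real
  whose values matter only on Th. A signaling structure is a finite set S of reals
  together with sigma s theta, the probability of signal s in state theta.\<close>

definition prob_on :: "real set \<Rightarrow> (real \<Rightarrow> real) \<Rightarrow> bool" where
  "prob_on Th p \<longleftrightarrow> (\<forall>t\<in>Th. p t \<ge> 0) \<and> (\<Sum>t\<in>Th. p t) = 1"

definition signaling :: "real set \<Rightarrow> real set \<Rightarrow> (real \<Rightarrow> real \<Rightarrow> real) \<Rightarrow> bool" where
  "signaling Th S sigma \<longleftrightarrow> finite S \<and> (\<forall>s\<in>S. \<forall>t\<in>Th. sigma s t \<ge> 0)
     \<and> (\<forall>t\<in>Th. (\<Sum>s\<in>S. sigma s t) = 1)"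

text \<open>MLRP: sigma(s'|t)/sigma(s|t) weakly increasing in t for s' > s, in cross-multiplied form.\<close>
definition MLRP :: "real set \<Rightarrow> real set \<Rightarrow> (real \<Rightarrow> real \<Rightarrow> real) \<Rightarrow> bool" where
  "MLRP Th S sigma \<longleftrightarrow> (\<forall>s\<in>S. \<forall>s'\<in>S. \<forall>t\<in>Th. \<forall>t'\<in>Th. s < s' \<longrightarrow> t < t' \<longrightarrow>
       sigma s' t * sigma s t' \<le> sigma s' t' * sigma s t)"

definition sig_marg :: "real set \<Rightarrow> (real \<Rightarrow> real) \<Rightarrow> (real \<Rightarrow> real \<Rightarrow> real) \<Rightarrow> real \<Rightarrow> real" where
  "sig_marg Th rho sigma s = (\<Sum>t\<in>Th. rho t * sigma s t)"

definition posterior :: "real set \<Rightarrow> (real \<Rightarrow> real) \<Rightarrow> (real \<Rightarrow> real \<Rightarrow> real) \<Rightarrow> real set \<Rightarrow> real \<Rightarrow> real" where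
  "posterior Th p sigma G s = (\<Sum>t\<in>G. p t * sigma s t) / sig_marg Th p sigma s"

definition rv_pmf :: "real set \<Rightarrow> (real \<Rightarrow> real) \<Rightarrow> (real \<Rightarrow> real) \<Rightarrow> real \<Rightarrow> real" where
  "rv_pmf S R Q v = (\<Sum>s\<in>{s\<in>S. R s = v}. Q s)"

definition lr_ge_on :: "real set \<Rightarrow> (real \<Rightarrow> real) \<Rightarrow> (real \<Rightarrow> real) \<Rightarrow> bool" where
  "lr_ge_on A X Y \<longleftrightarrow> (\<forall>u\<in>A. \<forall>v\<in>A. u < v \<longrightarrow> X u * Y v \<le> X v * Y u)"

definition rv_lr_ge :: "real set \<Rightarrow> (real \<Rightarrow> real) \<Rightarrow> (real \<Rightarrow> real) \<Rightarrow> (real \<Rightarrow> real) \<Rightarrow> bool" where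
  "rv_lr_ge S R Q1 Q2 \<longleftrightarrow> lr_ge_on UNIV (rv_pmf S R Q1) (rv_pmf S R Q2)"

definition upper_set :: "real set \<Rightarrow> real set \<Rightarrow> bool" where
  "upper_set Th G \<longleftrightarrow> G \<subseteq> Th \<and> (\<forall>t\<in>G. \<forall>t'\<in>Th. t' > t \<longrightarrow> t' \<in> G)"

definition cond_on :: "(real \<Rightarrow> real) \<Rightarrow> real set \<Rightarrow> real \<Rightarrow> real" where
  "cond_on rho G t = (if t \<in> G then rho t / (\<Sum>u\<in>G. rho u) else 0)"

inductive mono_reach :: "real set \<Rightarrow> (real \<Rightarrow> real) \<Rightarrow> (real \<Rightarrow> real) \<Rightarrow> bool"
  for Th :: "real set" and p :: "real \<Rightarrow> real" where
  start: "mono_reach Th p p"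
| step: "mono_reach Th p rho \<Longrightarrow> upper_set Th G \<Longrightarrow> (\<Sum>u\<in>G. rho u) > 0 \<Longrightarrow>
         0 \<le> a \<Longrightarrow> a \<le> 1 \<Longrightarrow>
         mono_reach Th p (\<lambda>t. a * cond_on rho G t + (1 - a) * rho t)"

definition monotonic_strengthening :: "real set \<Rightarrow> (real \<Rightarrow> real) \<Rightarrow> (real \<Rightarrow> real) \<Rightarrow> bool" where
  "monotonic_strengthening Th p q \<longleftrightarrow> (\<exists>rho. mono_reach Th p rho \<and> (\<forall>t\<in>Th. q t = rho t))"

definition monotonic_optimistic :: "real set \<Rightarrow> (real \<Rightarrow> real) \<Rightarrow> (real \<Rightarrow> real) \<Rightarrow> bool" where
  "monotonic_optimistic Th p q \<longleftrightarrow>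
     (\<forall>G S sigma. upper_set Th G \<longrightarrow> signaling Th S sigma \<longrightarrow> MLRP Th S sigma \<longrightarrow>
        rv_lr_ge S (posterior Th p sigma G) (sig_marg Th q sigma) (sig_marg Th p sigma))"

definition increasing_on :: "real set \<Rightarrow> (real \<Rightarrow> real) \<Rightarrow> bool" where
  "increasing_on S R \<longleftrightarrow> (\<forall>s\<in>S. \<forall>s'\<in>S. s \<le> s' \<longrightarrow> R s \<le> R s')"

end

theory Submission
  imports Defs
begin


lemma rv_lr_ge_I:
  assumes "finite S" and H: "\<And>s s'. s\<in>S \<Longrightarrow> s'\<in>S \<Longrightarrow> R s < R s' \<Longrightarrow> Q1 s * Q2 s' \<le> Q1 s' * Q2 s"
  shows "rv_lr_ge S R Q1 Q2"
  unfolding rv_lr_ge_def lr_ge_on_def rv_pmf_def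
proof (intro ballI impI)
  fix u v :: real assume uv: "u < v"
  let ?A = "{s\<in>S. R s = u}" and ?B = "{s\<in>S. R s = v}"
  have fA: "finite ?A" "finite ?B" using assms(1) by auto
  have "(\<Sum>s\<in>?A. Q1 s) * (\<Sum>s\<in>?B. Q2 s) = (\<Sum>s\<in>?A. \<Sum>s'\<in>?B. Q1 s * Q2 s')"
    by (rule sum_product)
  also have "\<dots> \<le> (\<Sum>s\<in>?A. \<Sum>s'\<in>?B. Q1 s' * Q2 s)"
    by (intro sum_mono) (use H uv in auto)
  also have "\<dots> = (\<Sum>s'\<in>?B. Q1 s') * (\<Sum>s\<in>?A. Q2 s)"
    by (simp add: sum_product sum.swap[of _ ?A] mult.commute)
  finally show "(\<Sum>s\<in>?A. Q1 s) * (\<Sum>s\<in>?B. Q2 s) \<le> (\<Sum>s'\<in>?B. Q1 s') * (\<Sum>s\<in>?A. Q2 s)" .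
qed

lemma marg_lr:
  assumes lr: "lr_ge_on Th q p" and ml: "MLRP Th S sigma" and s: "s\<in>S" "s'\<in>S" "s < s'"
  shows "sig_marg Th q sigma s * sig_marg Th p sigma s' \<le> sig_marg Th q sigma s' * sig_marg Th p sigma s"
proof -
  define D where "D t t' = sigma s t * sigma s' t' * (q t * p t' - q t' * p t)" for t t'
  have H: "D t t' + D t' t \<le> 0" if "t\<in>Th" "t'\<in>Th" for t t'
  proof -
    have key: "D a b + D b a \<le> 0" if "a\<in>Th" "b\<in>Th" "a < b" for a b
    proof -
      have "q a * p b - q b * p a \<le> 0" using lr that unfolding lr_ge_on_def by auto
      moreover have "sigma s a * sigma s' b - sigma s b * sigma s' a \<ge> 0"
        using ml that s unfolding MLRP_def by (auto simp: mult.commute)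
      moreover have "D a b + D b a = (q a * p b - q b * p a) * (sigma s a * sigma s' b - sigma s b * sigma s' a)"
        unfolding D_def by (simp add: algebra_simps)
      ultimately show ?thesis by (simp add: mult_nonpos_nonneg)
    qed
    consider "t < t'" | "t = t'" | "t' < t" by linarith
    then show ?thesis
    proof cases
      case 1 then show ?thesis using key that by auto
    next
      case 2 then show ?thesis unfolding D_def by simp
    next
      case 3 then show ?thesis using key[of t' t] that by linarith
    qed
  qed
  have "(\<Sum>t\<in>Th. \<Sum>t'\<in>Th. D t t') + (\<Sum>t\<in>Th. \<Sum>t'\<in>Th. D t' t) \<le> 0"
  proof -
    have "(\<Sum>t\<in>Th. \<Sum>t'\<in>Th. D t t') + (\<Sum>t\<in>Th. \<Sum>t'\<in>Th. D t' t) = (\<Sum>t\<in>Th. \<Sum>t'\<in>Th. D t t' + D t' t)"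
      by (simp add: sum.distrib)
    also have "\<dots> \<le> 0" by (intro sum_nonpos) (use H in auto)
    finally show ?thesis .
  qed
  moreover have "(\<Sum>t\<in>Th. \<Sum>t'\<in>Th. D t' t) = (\<Sum>t\<in>Th. \<Sum>t'\<in>Th. D t t')"
    by (rule sum.swap)
  ultimately have neg: "(\<Sum>t\<in>Th. \<Sum>t'\<in>Th. D t t') \<le> 0" by linarith
  have "(\<Sum>t\<in>Th. \<Sum>t'\<in>Th. D t t') = sig_marg Th q sigma s * sig_marg Th p sigma s' - sig_marg Th q sigma s' * sig_marg Th p sigma s"
  proof -
    have e1: "sig_marg Th q sigma s * sig_marg Th p sigma s' = (\<Sum>t\<in>Th. \<Sum>t'\<in>Th. q t * sigma s t * (p t' * sigma s' t'))"
      unfolding sig_marg_def by (rule sum_product)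
    have "sig_marg Th q sigma s' * sig_marg Th p sigma s = (\<Sum>t'\<in>Th. \<Sum>t\<in>Th. q t' * sigma s' t' * (p t * sigma s t))"
      unfolding sig_marg_def by (rule sum_product)
    also have "\<dots> = (\<Sum>t\<in>Th. \<Sum>t'\<in>Th. q t' * sigma s' t' * (p t * sigma s t))"
      by (rule sum.swap)
    finally have e2: "sig_marg Th q sigma s' * sig_marg Th p sigma s = \<dots>" .
    show ?thesis unfolding e1 e2 D_def
      by (simp add: sum_subtractf[symmetric] algebra_simps)
  qed
  with neg show ?thesis by linarith
qed


lemma reach_lr:
  assumes "mono_reach Th p rho" and p0: "\<forall>t\<in>Th. p t \<ge> 0"
  shows "(\<forall>t\<in>Th. rho t \<ge> 0) \<and> lr_ge_on Th rho p"
  using assms(1)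
proof induction
  case start
  then show ?case using p0 unfolding lr_ge_on_def by (auto simp: mult.commute)
next
  case (step rho G a)
  let ?Z = "\<Sum>u\<in>G. rho u"
  define c where "c t = (if t \<in> G then a / ?Z + (1 - a) else 1 - a)" for t
  have eq: "a * cond_on rho G t + (1 - a) * rho t = c t * rho t" for t
    unfolding c_def cond_on_def by (auto simp: field_simps)
  have c0: "c t \<ge> 0" for t using step.hyps(3-5) unfolding c_def by auto
  have cmono: "c u \<le> c v" if "u \<in> Th" "v \<in> Th" "u < v" for u v
    using that step.hyps(2-5) unfolding c_def upper_set_def by auto
  have nn: "\<forall>t\<in>Th. rho t \<ge> 0" and lr: "lr_ge_on Th rho p" using step.IH by auto
  show ?case unfolding eq
  proof
    show "\<forall>t\<in>Th. 0 \<le> c t * rho t" using nn c0 by auto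
    show "lr_ge_on Th (\<lambda>t. c t * rho t) p"
      unfolding lr_ge_on_def
    proof (intro ballI impI)
      fix u v assume uv: "u \<in> Th" "v \<in> Th" "u < v"
      have "rho u * p v \<le> rho v * p u" using lr uv unfolding lr_ge_on_def by auto
      hence "c u * (rho u * p v) \<le> c u * (rho v * p u)" using c0 by (rule mult_left_mono)
      also have "\<dots> \<le> c v * (rho v * p u)"
        by (rule mult_right_mono) (use cmono uv nn p0 in auto)
      finally show "c u * rho u * p v \<le> c v * rho v * p u" by (simp add: mult.assoc)
    qed
  qed
qed


lemma step_ratio:
  assumes reach: "mono_reach Th p rho" and fin: "finite Th" and nn: "\<forall>t\<in>Th. rho t \<ge> 0"
    and s1: "sum rho Th = 1" and G: "upper_set Th G" and Zp: "sum rho G > 0"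
    and c: "0 \<le> c0" "c0 \<le> c1"
    and r': "\<forall>t\<in>Th. r' t = (if t\<in>G then c1 else c0) * rho t" and s2: "sum r' Th = 1"
  shows "\<exists>rho''. mono_reach Th p rho'' \<and> (\<forall>t\<in>Th. rho'' t = r' t)"
proof -
  let ?Z = "sum rho G"
  have GT: "G \<subseteq> Th" using G unfolding upper_set_def by auto
  have split: "sum f Th = sum f G + sum f (Th - G)" for f :: "real \<Rightarrow> real"
    using sum.subset_diff[OF GT fin, of f] by simp
  have "sum r' Th = c1 * ?Z + c0 * sum rho (Th - G)"
  proof -
    have "sum r' G = (\<Sum>t\<in>G. c1 * rho t)" by (rule sum.cong) (use r' GT in auto)
    moreover have "sum r' (Th - G) = (\<Sum>t\<in>Th - G. c0 * rho t)" by (rule sum.cong) (use r' in auto)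
    ultimately show ?thesis unfolding split[of r'] by (simp add: sum_distrib_left)
  qed
  moreover have "sum rho (Th - G) = 1 - ?Z" using split[of rho] s1 by linarith
  ultimately have E: "c1 * ?Z + c0 * (1 - ?Z) = 1" using s2 by simp
  have "c0 * ?Z \<le> c1 * ?Z" using c Zp by (simp add: mult_right_mono)
  hence c01: "c0 \<le> 1" using E by (simp add: algebra_simps)
  define a where "a = 1 - c0"
  have a: "0 \<le> a" "a \<le> 1" using c c01 unfolding a_def by auto
  let ?rho = "\<lambda>t. a * cond_on rho G t + (1 - a) * rho t"
  have "mono_reach Th p ?rho" using mono_reach.step[OF reach G Zp a] .
  moreover have "\<forall>t\<in>Th. ?rho t = r' t"
  proof
    fix t assume t: "t \<in> Th"
    show "?rho t = r' t"
    proof (cases "t \<in> G")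
      case True
      have "c1 = (1 - c0) / ?Z + c0" using E Zp by (simp add: field_simps)
      then show ?thesis using True t r' unfolding cond_on_def a_def by (simp add: field_simps)
    next
      case False
      then show ?thesis using t r' unfolding cond_on_def a_def by simp
    qed
  qed
  ultimately show ?thesis by blast
qed

lemma lr_reach:
  assumes fin: "finite Th" and pp: "prob_on Th p" and pq: "prob_on Th q"
    and ppos: "\<forall>t\<in>Th. p t > 0" and lr: "lr_ge_on Th q p"
  shows "monotonic_strengthening Th p q"
proof -
  define r where "r t = q t / p t" for t
  define w where "w tau t = p t * r (max t tau)" for tau t
  define Z where "Z tau = sum (w tau) Th" for tau
  define rh where "rh tau t = w tau t / Z tau" for tau t
  have q0: "\<forall>t\<in>Th. q t \<ge> 0" and sq: "sum q Th = 1" using pq unfolding prob_on_def by auto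
  have sp: "sum p Th = 1" using pp unfolding prob_on_def by auto
  have ne: "Th \<noteq> {}" using sp by auto
  have r0: "r t \<ge> 0" if "t \<in> Th" for t using q0 ppos that unfolding r_def by auto
  have rmono: "r u \<le> r v" if "u \<in> Th" "v \<in> Th" "u \<le> v" for u v
  proof (cases "u = v")
    case False
    hence "q u * p v \<le> q v * p u" using lr that unfolding lr_ge_on_def by auto
    then show ?thesis using ppos that unfolding r_def by (simp add: divide_simps mult.commute)
  qed simp
  define M where "M = Max Th"
  have M: "M \<in> Th" "\<And>t. t \<in> Th \<Longrightarrow> t \<le> M" using fin ne unfolding M_def by auto
  have rM: "r M > 0"
  proof -
    obtain t where t: "t \<in> Th" "q t > 0"
    proof (rule ccontr)
      assume "\<not> thesis"
      with that have "\<forall>t\<in>Th. q t = 0" using q0 by force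
      with sq show False by simp
    qed
    hence "r t > 0" using ppos unfolding r_def by auto
    with rmono[OF t(1) M(1) M(2)[OF t(1)]] show ?thesis by linarith
  qed
  have maxTh: "max t tau \<in> Th" if "t\<in>Th" "tau\<in>Th" for t tau using that by (simp add: max_def)
  have w0: "w tau t \<ge> 0" if "t\<in>Th" "tau\<in>Th" for t tau
    using ppos r0 maxTh that unfolding w_def by (simp add: less_imp_le)
  have wM: "w tau M > 0" if "tau \<in> Th" for tau
  proof -
    have "max M tau = M" using M(2)[OF that] by simp
    then show ?thesis using M rM ppos unfolding w_def by simp
  qed
  have Zpos: "Z tau > 0" if "tau \<in> Th" for tau
  proof -
    have "w tau M \<le> Z tau" unfolding Z_def
      by (rule member_le_sum) (use M w0 that fin in auto)
    with wM[OF that] show ?thesis by linarith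
  qed
  have rh0: "rh tau t \<ge> 0" if "t\<in>Th" "tau\<in>Th" for t tau
    using w0[OF that] Zpos[OF that(2)] unfolding rh_def by simp
  have rh1: "sum (rh tau) Th = 1" if "tau \<in> Th" for tau
    using Zpos[OF that] unfolding rh_def Z_def by (simp add: sum_divide_distrib[symmetric])
  have main: "\<forall>tau\<in>Th. card {t\<in>Th. tau < t} = n \<longrightarrow>
     (\<exists>rho. mono_reach Th p rho \<and> (\<forall>t\<in>Th. rho t = rh tau t))" for n
  proof (induction n)
    case 0
    show ?case
    proof (intro ballI impI)
      fix tau assume tau: "tau \<in> Th" "card {t\<in>Th. tau < t} = 0"
      have "{t\<in>Th. tau < t} = {}" using tau fin by simp
      hence le: "t \<le> tau" if "t \<in> Th" for t using that by force
      have "\<forall>t\<in>Th. p t = rh tau t"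
      proof
        fix t assume t: "t \<in> Th"
        have mx: "max x tau = tau" if "x \<in> Th" for x using le[OF that] by simp
        have "Z tau = r tau * sum p Th" unfolding Z_def w_def
          by (simp add: mx sum_distrib_left mult.commute cong: sum.cong)
        hence "Z tau = r tau" using sp by simp
        moreover have "r tau > 0" using Zpos[OF tau(1)] calculation by simp
        ultimately show "p t = rh tau t" unfolding rh_def w_def using mx[OF t] by simp
      qed
      then show "\<exists>rho. mono_reach Th p rho \<and> (\<forall>t\<in>Th. rho t = rh tau t)"
        using mono_reach.start by blast
    qed
  next
    case (Suc k)
    show ?case
    proof (intro ballI impI)
      fix tau assume tau: "tau \<in> Th" "card {t\<in>Th. tau < t} = Suc k"
      define T where "T = {t\<in>Th. tau < t}"
      have Tf: "finite T" using fin unfolding T_def by auto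
      have Tne: "T \<noteq> {}" using tau(2) unfolding T_def by (metis card.empty nat.simps(3))
      define tau' where "tau' = Min T"
      have tau': "tau' \<in> T" "\<And>t. t \<in> T \<Longrightarrow> tau' \<le> t" using Tf Tne unfolding tau'_def by auto
      have tau'Th: "tau' \<in> Th" and tt: "tau < tau'" using tau' unfolding T_def by auto
      have "{t\<in>Th. tau' < t} = T - {tau'}" using tau' tt unfolding T_def by force
      hence "card {t\<in>Th. tau' < t} = k" using tau Tf tau'(1) unfolding T_def by simp
      then obtain rho where rho: "mono_reach Th p rho" "\<forall>t\<in>Th. rho t = rh tau' t"
        using Suc.IH tau'Th by blast
      have inT: "t \<in> T \<longleftrightarrow> tau' \<le> t" if "t \<in> Th" for t
        using that tau' tt unfolding T_def by auto
      show "\<exists>rho. mono_reach Th p rho \<and> (\<forall>t\<in>Th. rho t = rh tau t)"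
      proof (cases "r tau' = 0")
        case True
        have rt: "r tau = 0" using rmono[OF tau(1) tau'Th] tt r0[OF tau(1)] True by linarith
        have weq: "w tau t = w tau' t" if "t \<in> Th" for t
        proof (cases "t \<in> T")
          case True
          then show ?thesis using inT[OF that] tt unfolding w_def by (simp add: max_def)
        next
          case False
          then have "t \<le> tau" using that unfolding T_def by auto
          then show ?thesis using tt rt \<open>r tau' = 0\<close> unfolding w_def by (simp add: max_def)
        qed
        hence "Z tau = Z tau'" unfolding Z_def by (rule sum.cong[OF refl])
        hence "\<forall>t\<in>Th. rho t = rh tau t" using rho(2) weq unfolding rh_def by simp
        then show ?thesis using rho(1) by blast
      next
        case False
        hence rpos: "r tau' > 0" using r0[OF tau'Th] by simp
        define c1 where "c1 = Z tau' / Z tau"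
        define c0 where "c0 = r tau * Z tau' / (r tau' * Z tau)"
        have Zt: "Z tau > 0" "Z tau' > 0" using Zpos tau(1) tau'Th by auto
        have cc: "0 \<le> c0" "c0 \<le> c1"
        proof -
          show "0 \<le> c0" unfolding c0_def using Zt rpos r0[OF tau(1)] by simp
          have "r tau \<le> r tau'" using rmono[OF tau(1) tau'Th] tt by simp
          hence "r tau / r tau' \<le> 1" using rpos by simp
          hence "r tau / r tau' * (Z tau' / Z tau) \<le> 1 * (Z tau' / Z tau)"
            using Zt by (intro mult_right_mono) auto
          then show "c0 \<le> c1" unfolding c0_def c1_def by simp
        qed
        have GT: "upper_set Th T" unfolding upper_set_def T_def by auto
        have "sum rho T \<ge> rho M"
        proof (rule member_le_sum)
          show "M \<in> T" using M tt M(2)[OF tau'Th] unfolding T_def by auto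
          show "finite T" using Tf .
          show "\<And>x. x \<in> T - {M} \<Longrightarrow> 0 \<le> rho x" using rho(2) rh0 tau'Th unfolding T_def by auto
        qed
        moreover have "rho M > 0" using rho(2) M(1) wM[OF tau'Th] Zt unfolding rh_def by simp
        ultimately have Tpos: "sum rho T > 0" by linarith
        have rhoTh: "\<forall>t\<in>Th. rho t \<ge> 0" using rho(2) rh0 tau'Th by simp
        have rhos: "sum rho Th = 1" using rho(2) rh1[OF tau'Th] by (simp cong: sum.cong)
        have eqs: "\<forall>t\<in>Th. rh tau t = (if t\<in>T then c1 else c0) * rho t"
        proof
          fix t assume t: "t \<in> Th"
          show "rh tau t = (if t\<in>T then c1 else c0) * rho t"
          proof (cases "t \<in> T")
            case True
            hence "max t tau = t" "max t tau' = t" using inT[OF t] tt by auto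
            then show ?thesis using True rho(2) t Zt unfolding rh_def w_def c1_def by simp
          next
            case False
            hence "max t tau = tau" "max t tau' = tau'" using t tt unfolding T_def by auto
            then show ?thesis using False rho(2) t Zt rpos unfolding rh_def w_def c0_def
              by (simp add: field_simps)
          qed
        qed
        show ?thesis
          using step_ratio[OF rho(1) fin rhoTh rhos GT Tpos cc eqs rh1[OF tau(1)]] by blast
      qed
    qed
  qed
  define m where "m = Min Th"
  have m: "m \<in> Th" "\<And>t. t \<in> Th \<Longrightarrow> m \<le> t" using fin ne unfolding m_def by auto
  obtain rho where rho: "mono_reach Th p rho" "\<forall>t\<in>Th. rho t = rh m t" using main m(1) by blast
  have wq: "w m t = q t" if "t \<in> Th" for t
    using m(2)[OF that] ppos that unfolding w_def r_def by (auto simp add: max_def)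
  have "Z m = 1" unfolding Z_def using wq sq by (simp cong: sum.cong)
  hence "\<forall>t\<in>Th. q t = rho t" using rho(2) wq unfolding rh_def by simp
  then show ?thesis unfolding monotonic_strengthening_def using rho(1) by blast
qed


lemma lr_from_consec:
  assumes fin: "finite Th" and ppos: "\<forall>t\<in>Th. p t > 0"
    and cons: "\<And>u v. u\<in>Th \<Longrightarrow> v\<in>Th \<Longrightarrow> u < v \<Longrightarrow> (\<forall>t\<in>Th. \<not> (u < t \<and> t < v)) \<Longrightarrow> q u * p v \<le> q v * p u"
  shows "lr_ge_on Th q p"
proof -
  define r where "r t = q t / p t" for t
  have conv: "q u * p v \<le> q v * p u \<longleftrightarrow> r u \<le> r v" if "u\<in>Th" "v\<in>Th" for u v
    using ppos that unfolding r_def by (simp add: divide_simps mult.commute)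
  have main: "\<And>u v. u\<in>Th \<Longrightarrow> v\<in>Th \<Longrightarrow> u < v \<Longrightarrow> card {t\<in>Th. u < t \<and> t < v} = n \<Longrightarrow> r u \<le> r v" for n
  proof (induction n rule: less_induct)
    case (less n u v)
    show ?case
    proof (cases "\<forall>t\<in>Th. \<not> (u < t \<and> t < v)")
      case True
      then show ?thesis using cons[OF less.prems(1-3)] conv less.prems by simp
    next
      case False
      then obtain w where w: "w \<in> Th" "u < w" "w < v" by auto
      have f: "finite {t\<in>Th. u < t \<and> t < v}" using fin by simp
      have c1: "card {t\<in>Th. u < t \<and> t < w} < n"
        unfolding less.prems(4)[symmetric] by (rule psubset_card_mono[OF f]) (use w in auto)
      have c2: "card {t\<in>Th. w < t \<and> t < v} < n"
        unfolding less.prems(4)[symmetric] by (rule psubset_card_mono[OF f]) (use w in auto)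
      have "r u \<le> r w" using less.IH[OF c1 less.prems(1) w(1) w(2) refl] .
      also have "r w \<le> r v" using less.IH[OF c2 w(1) less.prems(2) w(3) refl] .
      finally show ?thesis .
    qed
  qed
  show ?thesis unfolding lr_ge_on_def using main conv by blast
qed


lemma post_mono:
  assumes fin: "finite Th" and p0: "\<forall>t\<in>Th. p t \<ge> 0" and sg: "signaling Th S sigma"
    and ml: "MLRP Th S sigma" and G: "upper_set Th G"
    and s: "s1 \<in> S" "s2 \<in> S" "s1 < s2"
    and m: "sig_marg Th p sigma s1 > 0" "sig_marg Th p sigma s2 > 0"
  shows "posterior Th p sigma G s1 \<le> posterior Th p sigma G s2"
proof -
  have GT: "G \<subseteq> Th" using G unfolding upper_set_def by auto
  define A where "A s = (\<Sum>t\<in>G. p t * sigma s t)" for s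
  define B where "B s = (\<Sum>t\<in>Th - G. p t * sigma s t)" for s
  have mAB: "sig_marg Th p sigma s = A s + B s" for s
    unfolding sig_marg_def A_def B_def using sum.subset_diff[OF GT fin, of "\<lambda>t. p t * sigma s t"] by simp
  have lt: "t' < t" if "t \<in> G" "t' \<in> Th - G" for t t'
  proof (rule ccontr)
    assume "\<not> t' < t"
    hence "t < t' \<or> t = t'" by auto
    then show False using G that unfolding upper_set_def by auto
  qed
  have "A s1 * B s2 = (\<Sum>t\<in>G. \<Sum>t'\<in>Th - G. p t * sigma s1 t * (p t' * sigma s2 t'))"
    unfolding A_def B_def by (rule sum_product)
  also have "\<dots> \<le> (\<Sum>t\<in>G. \<Sum>t'\<in>Th - G. p t * sigma s2 t * (p t' * sigma s1 t'))"
  proof (intro sum_mono)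
    fix t t' assume tt: "t \<in> G" "t' \<in> Th - G"
    have "sigma s2 t' * sigma s1 t \<le> sigma s2 t * sigma s1 t'"
      using ml s tt lt[OF tt] GT unfolding MLRP_def by blast
    moreover have "p t * p t' \<ge> 0" using p0 tt GT by auto
    ultimately have "p t * p t' * (sigma s2 t' * sigma s1 t) \<le> p t * p t' * (sigma s2 t * sigma s1 t')"
      by (rule mult_left_mono)
    then show "p t * sigma s1 t * (p t' * sigma s2 t') \<le> p t * sigma s2 t * (p t' * sigma s1 t')"
      by (simp add: algebra_simps)
  qed
  also have "\<dots> = A s2 * B s1"
    unfolding A_def B_def by (rule sum_product[symmetric])
  finally have key: "A s1 * B s2 \<le> A s2 * B s1" .
  have h: "A s1 * (A s2 + B s2) \<le> A s2 * (A s1 + B s1)" using key by (simp add: algebra_simps)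
  have d: "A s1 + B s1 > 0" "A s2 + B s2 > 0" using m unfolding mAB by auto
  have "A s1 / (A s1 + B s1) \<le> A s2 / (A s2 + B s2)"
    using h d by (simp add: divide_le_eq le_divide_eq mult.commute)
  then show ?thesis unfolding posterior_def mAB A_def .
qed

lemma marg_zero:
  assumes fin: "finite Th" and ppos: "\<forall>t\<in>Th. p t > 0" and sg: "signaling Th S sigma"
    and s: "s \<in> S" and z: "sig_marg Th p sigma s = 0"
  shows "sig_marg Th q sigma s = 0"
proof -
  have nn: "\<forall>t\<in>Th. p t * sigma s t \<ge> 0" using ppos sg s unfolding signaling_def by (simp add: less_imp_le)
  have "\<forall>t\<in>Th. p t * sigma s t = 0"
    using sum_nonneg_eq_0_iff[OF fin, of "\<lambda>t. p t * sigma s t"] nn z unfolding sig_marg_def by simp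
  hence "\<forall>t\<in>Th. sigma s t = 0" using ppos by (metis less_irrefl mult_eq_0_iff)
  then show ?thesis unfolding sig_marg_def by simp
qed

lemma lr_opt:
  assumes fin: "finite Th" and ppos: "\<forall>t\<in>Th. p t > 0" and lr: "lr_ge_on Th q p"
  shows "monotonic_optimistic Th p q"
  unfolding monotonic_optimistic_def
proof (intro allI impI)
  fix G S sigma assume G: "upper_set Th G" and sg: "signaling Th S sigma" and ml: "MLRP Th S sigma"
  have finS: "finite S" using sg unfolding signaling_def by auto
  have p0: "\<forall>t\<in>Th. p t \<ge> 0" using ppos by (simp add: less_imp_le)
  have mnn: "sig_marg Th p sigma s \<ge> 0" if "s \<in> S" for s
    unfolding sig_marg_def by (rule sum_nonneg) (use p0 sg that in \<open>auto simp: signaling_def\<close>)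
  show "rv_lr_ge S (posterior Th p sigma G) (sig_marg Th q sigma) (sig_marg Th p sigma)"
  proof (rule rv_lr_ge_I[OF finS])
    fix s s' assume ss: "s \<in> S" "s' \<in> S" and lt: "posterior Th p sigma G s < posterior Th p sigma G s'"
    show "sig_marg Th q sigma s * sig_marg Th p sigma s' \<le> sig_marg Th q sigma s' * sig_marg Th p sigma s"
    proof (cases "sig_marg Th p sigma s = 0 \<or> sig_marg Th p sigma s' = 0")
      case True
      then show ?thesis using marg_zero[OF fin ppos sg ss(1)] marg_zero[OF fin ppos sg ss(2)] by auto
    next
      case False
      hence pos: "sig_marg Th p sigma s > 0" "sig_marg Th p sigma s' > 0" using mnn ss by (auto simp: order_le_less)
      have "s < s'"
      proof (rule ccontr)
        assume "\<not> s < s'"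
        then consider "s = s'" | "s' < s" by linarith
        then show False
        proof cases
          case 1 then show False using lt by simp
        next
          case 2
          have "posterior Th p sigma G s' \<le> posterior Th p sigma G s"
            by (rule post_mono[OF fin p0 sg ml G ss(2) ss(1) 2 pos(2) pos(1)])
          then show False using lt by simp
        qed
      qed
      then show ?thesis using marg_lr[OF lr ml ss] by simp
    qed
  qed
qed

lemma ii_lr:
  assumes fin: "finite Th"
    and H: "\<forall>S sigma. signaling Th S sigma \<longrightarrow> MLRP Th S sigma \<longrightarrow>
          rv_lr_ge S id (sig_marg Th q sigma) (sig_marg Th p sigma)"
  shows "lr_ge_on Th q p"
proof -
  define sigma :: "real \<Rightarrow> real \<Rightarrow> real" where "sigma s t = (if s = t then 1 else 0)" for s t
  have sg: "signaling Th Th sigma" unfolding signaling_def sigma_def using fin by auto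
  have ml: "MLRP Th Th sigma" unfolding MLRP_def sigma_def by auto
  have mg: "sig_marg Th f sigma s = f s" if "s \<in> Th" for f s
  proof -
    have "(\<Sum>t\<in>Th. f t * sigma s t) = (\<Sum>t\<in>Th. if t = s then f t else 0)"
      by (rule sum.cong) (auto simp: sigma_def)
    then show ?thesis unfolding sig_marg_def using that fin by simp
  qed
  have pm: "rv_pmf Th id Q v = Q v" if "v \<in> Th" for Q v
  proof -
    have "{s\<in>Th. id s = v} = {v}" using that by auto
    then show ?thesis unfolding rv_pmf_def by simp
  qed
  have "rv_lr_ge Th id (sig_marg Th q sigma) (sig_marg Th p sigma)" using H sg ml by blast
  hence R: "\<forall>u v. u < v \<longrightarrow> rv_pmf Th id (sig_marg Th q sigma) u * rv_pmf Th id (sig_marg Th p sigma) v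
     \<le> rv_pmf Th id (sig_marg Th q sigma) v * rv_pmf Th id (sig_marg Th p sigma) u"
    unfolding rv_lr_ge_def lr_ge_on_def by blast
  show ?thesis unfolding lr_ge_on_def
  proof (intro ballI impI)
    fix u v assume uv: "u \<in> Th" "v \<in> Th" "u < v"
    have "rv_pmf Th id (sig_marg Th q sigma) u * rv_pmf Th id (sig_marg Th p sigma) v
     \<le> rv_pmf Th id (sig_marg Th q sigma) v * rv_pmf Th id (sig_marg Th p sigma) u" using R uv(3) by blast
    then show "q u * p v \<le> q v * p u" by (simp only: pm[OF uv(1)] pm[OF uv(2)] mg[OF uv(1)] mg[OF uv(2)])
  qed
qed


lemma opt_consec:
  assumes fin: "finite Th" and ppos: "\<forall>t\<in>Th. p t > 0" and opt: "monotonic_optimistic Th p q"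
    and u: "u \<in> Th" and v: "v \<in> Th" and uv: "u < v" and nb: "\<forall>t\<in>Th. \<not> (u < t \<and> t < v)"
  shows "q u * p v \<le> q v * p u"
proof -
  define S :: "real set" where "S = {1,2,3,4}"
  define sigma :: "real \<Rightarrow> real \<Rightarrow> real" where "sigma s t =
    (if t < u then (if s = 1 then 1 else 0)
     else if t = u then (if s = 2 then 3/4 else if s = 3 then 1/4 else 0)
     else if t = v then (if s = 2 then 1/4 else if s = 3 then 3/4 else 0)
     else (if s = 4 then 1 else 0))" for s t
  define G where "G = {t\<in>Th. v \<le> t}"
  have cls: "t < u \<or> t = u \<or> t = v \<or> v < t" if "t \<in> Th" for t using nb that by force
  have sg: "signaling Th S sigma"
    unfolding signaling_def S_def sigma_def by auto
  have ml: "MLRP Th S sigma"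
    unfolding MLRP_def
  proof (intro ballI impI)
    fix s s' t t' assume ss: "s \<in> S" "s' \<in> S" "t \<in> Th" "t' \<in> Th" "s < s'" "t < t'"
    show "sigma s' t * sigma s t' \<le> sigma s' t' * sigma s t"
      using cls[OF ss(3)] cls[OF ss(4)] ss uv unfolding S_def sigma_def by auto
  qed
  have GU: "upper_set Th G" unfolding upper_set_def G_def by auto
  have R: "rv_lr_ge S (posterior Th p sigma G) (sig_marg Th q sigma) (sig_marg Th p sigma)"
    using opt GU sg ml unfolding monotonic_optimistic_def by blast
  have uvTh: "{u, v} \<subseteq> Th" using u v by auto
  have sum_uv: "(\<Sum>t\<in>Th. f t) = f u + f v" if "\<And>t. t \<in> Th - {u, v} \<Longrightarrow> f t = 0" for f :: "real \<Rightarrow> real"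
  proof -
    have "(\<Sum>t\<in>Th. f t) = (\<Sum>t\<in>{u,v}. f t)"
      by (rule sum.mono_neutral_right[OF fin uvTh]) (use that in auto)
    then show ?thesis using uv by simp
  qed
  have m2: "sig_marg Th f sigma 2 = 3/4 * f u + 1/4 * f v" for f
    unfolding sig_marg_def by (subst sum_uv) (use cls uv in \<open>auto simp: sigma_def\<close>)
  have m3: "sig_marg Th f sigma 3 = 1/4 * f u + 3/4 * f v" for f
    unfolding sig_marg_def by (subst sum_uv) (use cls uv in \<open>auto simp: sigma_def\<close>)
  have Gsub: "G \<subseteq> Th" unfolding G_def by auto
  have finG: "finite G" using fin Gsub by (rule finite_subset[rotated])
  have vG: "v \<in> G" using v unfolding G_def by auto
  have sum_v: "(\<Sum>t\<in>G. f t) = f v" if "\<And>t. t \<in> G - {v} \<Longrightarrow> f t = 0" for f :: "real \<Rightarrow> real"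
  proof -
    have "(\<Sum>t\<in>G. f t) = (\<Sum>t\<in>{v}. f t)"
      by (rule sum.mono_neutral_right[OF finG]) (use that vG in auto)
    then show ?thesis by simp
  qed
  have n2: "(\<Sum>t\<in>G. p t * sigma 2 t) = 1/4 * p v"
    by (subst sum_v) (use uv in \<open>auto simp: sigma_def G_def\<close>)
  have n3: "(\<Sum>t\<in>G. p t * sigma 3 t) = 3/4 * p v"
    by (subst sum_v) (use uv in \<open>auto simp: sigma_def G_def\<close>)
  have n1: "(\<Sum>t\<in>G. p t * sigma 1 t) = 0"
    by (rule sum.neutral) (use uv in \<open>auto simp: sigma_def G_def\<close>)
  have n4: "(\<Sum>t\<in>G. p t * sigma 4 t) = sig_marg Th p sigma 4"
    unfolding sig_marg_def
  proof (rule sum.mono_neutral_left[OF fin Gsub], rule ballI)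
    fix i assume i: "i \<in> Th - G"
    hence "i < u \<or> i = u" using cls[of i] unfolding G_def by auto
    then show "p i * sigma 4 i = 0" using uv unfolding sigma_def by auto
  qed
  have pu: "p u > 0" and pv: "p v > 0" using ppos u v by auto
  define x where "x = posterior Th p sigma G 2"
  define y where "y = posterior Th p sigma G 3"
  have x: "x = (1/4 * p v) / (3/4 * p u + 1/4 * p v)" unfolding x_def posterior_def n2 m2 ..
  have y: "y = (3/4 * p v) / (1/4 * p u + 3/4 * p v)" unfolding y_def posterior_def n3 m3 ..
  have x01: "0 < x" "x < 1" unfolding x using pu pv by (auto simp: divide_simps)
  have y01: "0 < y" "y < 1" unfolding y using pu pv by (auto simp: divide_simps)
  have xy: "x < y" unfolding x y using pu pv by (simp add: divide_simps algebra_simps)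
  have p1: "posterior Th p sigma G 1 = 0" unfolding posterior_def n1 by simp
  have p4: "posterior Th p sigma G 4 = 0 \<or> posterior Th p sigma G 4 = 1"
    unfolding posterior_def n4 by auto
  have px: "posterior Th p sigma G 2 = x" and py: "posterior Th p sigma G 3 = y" by (simp_all add: x_def y_def)
  have Sx: "{s\<in>S. posterior Th p sigma G s = x} = {2}"
    using p1 p4 x01 xy px py unfolding S_def by auto
  have Sy: "{s\<in>S. posterior Th p sigma G s = y} = {3}"
    using p1 p4 y01 xy px py unfolding S_def by auto
  have "rv_pmf S (posterior Th p sigma G) (sig_marg Th q sigma) x * rv_pmf S (posterior Th p sigma G) (sig_marg Th p sigma) y
      \<le> rv_pmf S (posterior Th p sigma G) (sig_marg Th q sigma) y * rv_pmf S (posterior Th p sigma G) (sig_marg Th p sigma) x"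
    using R xy unfolding rv_lr_ge_def lr_ge_on_def by blast
  hence "(3/4 * q u + 1/4 * q v) * (1/4 * p u + 3/4 * p v) \<le> (1/4 * q u + 3/4 * q v) * (3/4 * p u + 1/4 * p v)"
    unfolding rv_pmf_def Sx Sy by (simp add: m2 m3)
  then show ?thesis by (simp add: algebra_simps)
qed

theorem proposition4:
  fixes Th :: "real set" and p q :: "real \<Rightarrow> real"
  assumes "finite Th"
    and "prob_on Th p" and "prob_on Th q"
    and "\<forall>t\<in>Th. p t > 0"
  shows "(monotonic_optimistic Th p q \<longleftrightarrow> monotonic_strengthening Th p q)
    \<and> (lr_ge_on Th q p \<longleftrightarrow> monotonic_strengthening Th p q)
    \<and> ((\<forall>S sigma. signaling Th S sigma \<longrightarrow> MLRP Th S sigma \<longrightarrow>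
          rv_lr_ge S id (sig_marg Th q sigma) (sig_marg Th p sigma))
        \<longleftrightarrow> monotonic_strengthening Th p q)
    \<and> ((\<forall>S sigma R. signaling Th S sigma \<longrightarrow> MLRP Th S sigma \<longrightarrow> increasing_on S R \<longrightarrow>
          rv_lr_ge S R (sig_marg Th q sigma) (sig_marg Th p sigma))
        \<longleftrightarrow> monotonic_strengthening Th p q)"
proof -
  note fin = assms(1) and pp = assms(2) and pq = assms(3) and ppos = assms(4)
  have p0: "\<forall>t\<in>Th. p t \<ge> 0" using ppos by (simp add: less_imp_le)
  have MS_L: "monotonic_strengthening Th p q \<longleftrightarrow> lr_ge_on Th q p"
  proof
    assume "monotonic_strengthening Th p q"
    then obtain rho where rho: "mono_reach Th p rho" "\<forall>t\<in>Th. q t = rho t"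
      unfolding monotonic_strengthening_def by blast
    have "lr_ge_on Th rho p" using reach_lr[OF rho(1) p0] by blast
    then show "lr_ge_on Th q p" using rho(2) unfolding lr_ge_on_def by auto
  next
    assume "lr_ge_on Th q p"
    then show "monotonic_strengthening Th p q" by (rule lr_reach[OF fin pp pq ppos])
  qed
  have L_III: "\<forall>S sigma R. signaling Th S sigma \<longrightarrow> MLRP Th S sigma \<longrightarrow> increasing_on S R \<longrightarrow>
          rv_lr_ge S R (sig_marg Th q sigma) (sig_marg Th p sigma)" if lr: "lr_ge_on Th q p"
  proof (intro allI impI)
    fix S sigma R assume sg: "signaling Th S sigma" and ml: "MLRP Th S sigma" and inc: "increasing_on S R"
    have finS: "finite S" using sg unfolding signaling_def by auto
    show "rv_lr_ge S R (sig_marg Th q sigma) (sig_marg Th p sigma)"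
    proof (rule rv_lr_ge_I[OF finS])
      fix s s' assume ss: "s \<in> S" "s' \<in> S" "R s < R s'"
      have "s < s'"
      proof (rule ccontr)
        assume "\<not> s < s'"
        hence "R s' \<le> R s" using inc ss unfolding increasing_on_def by auto
        then show False using ss by simp
      qed
      then show "sig_marg Th q sigma s * sig_marg Th p sigma s' \<le> sig_marg Th q sigma s' * sig_marg Th p sigma s"
        using marg_lr[OF lr ml ss(1,2)] by simp
    qed
  qed
  have III_II: "\<forall>S sigma. signaling Th S sigma \<longrightarrow> MLRP Th S sigma \<longrightarrow>
          rv_lr_ge S id (sig_marg Th q sigma) (sig_marg Th p sigma)"
    if "\<forall>S sigma R. signaling Th S sigma \<longrightarrow> MLRP Th S sigma \<longrightarrow> increasing_on S R \<longrightarrow>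
          rv_lr_ge S R (sig_marg Th q sigma) (sig_marg Th p sigma)"
  proof -
    have "increasing_on S id" for S unfolding increasing_on_def by simp
    then show ?thesis using that by simp
  qed
  have OPT_L: "lr_ge_on Th q p" if "monotonic_optimistic Th p q"
  proof (rule lr_from_consec[OF fin ppos])
    fix u v assume "u \<in> Th" "v \<in> Th" "u < v" "\<forall>t\<in>Th. \<not> (u < t \<and> t < v)"
    then show "q u * p v \<le> q v * p u" by (rule opt_consec[OF fin ppos that])
  qed
  show ?thesis
  proof (intro conjI)
    show "monotonic_optimistic Th p q \<longleftrightarrow> monotonic_strengthening Th p q"
    proof
      assume "monotonic_optimistic Th p q"
      then show "monotonic_strengthening Th p q" using OPT_L MS_L by simp
    next
      assume "monotonic_strengthening Th p q"
      then show "monotonic_optimistic Th p q" using lr_opt[OF fin ppos] MS_L by simp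
    qed
    show "lr_ge_on Th q p \<longleftrightarrow> monotonic_strengthening Th p q" using MS_L by simp
    show "(\<forall>S sigma. signaling Th S sigma \<longrightarrow> MLRP Th S sigma \<longrightarrow>
          rv_lr_ge S id (sig_marg Th q sigma) (sig_marg Th p sigma))
        \<longleftrightarrow> monotonic_strengthening Th p q"
    proof
      assume h: "\<forall>S sigma. signaling Th S sigma \<longrightarrow> MLRP Th S sigma \<longrightarrow>
          rv_lr_ge S id (sig_marg Th q sigma) (sig_marg Th p sigma)"
      show "monotonic_strengthening Th p q" using ii_lr[OF fin h] MS_L by simp
    next
      assume "monotonic_strengthening Th p q"
      hence "lr_ge_on Th q p" using MS_L by simp
      then show "\<forall>S sigma. signaling Th S sigma \<longrightarrow> MLRP Th S sigma \<longrightarrow>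
          rv_lr_ge S id (sig_marg Th q sigma) (sig_marg Th p sigma)"
        by (rule III_II[OF L_III])
    qed
    show "(\<forall>S sigma R. signaling Th S sigma \<longrightarrow> MLRP Th S sigma \<longrightarrow> increasing_on S R \<longrightarrow>
          rv_lr_ge S R (sig_marg Th q sigma) (sig_marg Th p sigma))
        \<longleftrightarrow> monotonic_strengthening Th p q"
    proof
      assume h: "\<forall>S sigma R. signaling Th S sigma \<longrightarrow> MLRP Th S sigma \<longrightarrow> increasing_on S R \<longrightarrow>
          rv_lr_ge S R (sig_marg Th q sigma) (sig_marg Th p sigma)"
      show "monotonic_strengthening Th p q" using ii_lr[OF fin III_II[OF h]] MS_L by simp
    next
      assume "monotonic_strengthening Th p q"
      hence "lr_ge_on Th q p" using MS_L by simp
      then show "\<forall>S sigma R. signaling Th S sigma \<longrightarrow> MLRP Th S sigma \<longrightarrow> increasing_on S R \<longrightarrow>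
          rv_lr_ge S R (sig_marg Th q sigma) (sig_marg Th p sigma)"
        by (rule L_III)
    qed
  qed
qed

end
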